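(* Let $A\in\mathbb C^{N\times N}$ be an adjacency matrix with $k$ distinct eigenvalues $\lambda_1,\dots,\lambda_k$, and for each $i=1,\dots,k$ let $V_i\in\mathbb C^{N\times a_i}$ ($a_i$ the algebraic multiplicity of $\lambda_i$) be an eigenvector submatrix whose columns form the union of the Jordan chains of $\lambda_i$ in a Jordan decomposition $A=VJV^{-1}$, normalized so that $\|V_i\|_1=1$. Then the graph total variation satisfies $\mathrm{TV}_G(V_i)=\|V_i-AV_i\|_1\le |1-\lambda_i|+1$.
   Context: $\|\cdot\|_1$ denotes the matrix norm induced by the vector $1$-norm (maximum absolute column sum). A Jordan chain of $A$ for $\lambda$ is a sequence $v_1,\dots,v_p$ with $(A-\lambda I)v_1=0$, $v_1\neq0$, and $(A-\lambda I)v_j=v_{j-1}$ for $j\ge2$; the union of the Jordan chains of $\lambda_i$ spans the generalized eigenspace $\mathrm{Ker}(A-\lambda_iI)^{m_i}$. *)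

theory Defs
  imports "Jordan_Normal_Form.Jordan_Normal_Form"
begin

definition norm1_mat :: "complex mat \<Rightarrow> real" where
  "norm1_mat M = Max (insert 0 {(\<Sum>i<dim_row M. cmod (M $$ (i, j))) | j. j < dim_col M})"

definition graph_TV :: "complex mat \<Rightarrow> complex mat \<Rightarrow> real" where
  "graph_TV A V = norm1_mat (V - A * V)"

text \<open>Index of the first column of block number b in the Jordan matrix jordan_matrix bs.\<close>
definition block_start :: "(nat \<times> 'a) list \<Rightarrow> nat \<Rightarrow> nat" where
  "block_start bs b = sum_list (map fst (take b bs))"

definition eig_col_indices :: "(nat \<times> 'a) list \<Rightarrow> 'a \<Rightarrow> nat list" where
  "eig_col_indices bs lam =
     concat (map (\<lambda>b. [block_start bs b ..< block_start bs b + fst (bs ! b)])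
                 (filter (\<lambda>b. snd (bs ! b) = lam) [0..<length bs]))"

text \<open>Eigenvector submatrix: the columns of P forming the Jordan chains of lam
  in the Jordan decomposition A = P * jordan_matrix bs * P^-1.\<close>
definition jordan_eigvec_submatrix :: "'a mat \<Rightarrow> (nat \<times> 'a) list \<Rightarrow> 'a \<Rightarrow> 'a mat" where
  "jordan_eigvec_submatrix P bs lam = mat_of_cols (dim_row P) (map (col P) (eig_col_indices bs lam))"

end

theory Submission
  imports Defs
begin

lemma block_start_Cons0[simp]: "block_start (x#xs) 0 = 0"
  by (simp add: block_start_def)
lemma block_start_ConsS[simp]: "block_start (x#xs) (Suc b) = fst x + block_start xs b"
  by (simp add: block_start_def)

lemma block_start_bound: "b < length bs \<Longrightarrow> block_start bs b + fst (bs!b) \<le> sum_list (map fst bs)"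
proof (induct bs arbitrary: b)
  case (Cons x xs) then show ?case by (cases b) auto
qed simp

lemma jm_entry:
  assumes "b < length bs" "t < fst (bs!b)" "l < sum_list (map fst bs)"
  shows "jordan_matrix bs $$ (l, block_start bs b + t) =
    (if l = block_start bs b + t then snd (bs!b) else if Suc l = block_start bs b + t \<and> t > 0 then 1 else 0)"
  using assms
proof (induct bs arbitrary: b l)
  case Nil then show ?case by simp
next
  case (Cons x xs)
  obtain n a where x: "x = (n,a)" by force
  have jb: "block_start xs b' + fst (xs!b') \<le> sum_list (map fst xs)" if "b' < length xs" for b'
    using block_start_bound that by blast
  show ?case
  proof (cases b)
    case 0
    then show ?thesis using Cons.prems unfolding x jordan_matrix_Cons
      by (auto simp: jordan_matrix_def[symmetric])
  next
    case (Suc b')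
    have b': "b' < length xs" "t < fst (xs!b')" using Cons.prems Suc by auto
    have IH: "l' < sum_list (map fst xs) \<Longrightarrow> jordan_matrix xs $$ (l', block_start xs b' + t) =
    (if l' = block_start xs b' + t then snd (xs!b') else if Suc l' = block_start xs b' + t \<and> t > 0 then 1 else 0)" for l'
      using Cons.hyps b' by blast
    have lt: "block_start xs b' + t < sum_list (map fst xs)" using jb[OF b'(1)] b'(2) by linarith
    show ?thesis
    proof (cases "l < n")
      case True
      then show ?thesis using Cons.prems Suc lt unfolding x jordan_matrix_Cons by auto
    next
      case False
      then show ?thesis using Cons.prems Suc lt IH[of "l - n"] unfolding x jordan_matrix_Cons by auto
    qed
  qed
qed

lemma PJ_entry:
  fixes P :: "complex mat"
  assumes "b < length bs" "t < fst (bs!b)" "P \<in> carrier_mat N (sum_list (map fst bs))" "i < N"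
  shows "(P * jordan_matrix bs) $$ (i, block_start bs b + t) =
    snd (bs!b) * P $$ (i, block_start bs b + t) + (if t > 0 then P $$ (i, block_start bs b + t - 1) else 0)"
proof -
  let ?n = "sum_list (map fst bs)" and ?j = "block_start bs b + t"
  have jl: "?j < ?n" using block_start_bound[OF assms(1)] assms(2) by linarith
  have "(P * jordan_matrix bs) $$ (i, ?j) = (\<Sum>l<?n. P $$ (i,l) * jordan_matrix bs $$ (l, ?j))"
    using assms jl by (simp add: scalar_prod_def lessThan_atLeast0 mult.commute)
  also have "\<dots> = (\<Sum>l<?n. (if l = ?j then P $$ (i,l) * snd (bs!b) else 0)
      + (if Suc l = ?j \<and> t > 0 then P $$ (i,l) else 0))"
    by (rule sum.cong) (auto simp: jm_entry[OF assms(1,2)])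
  also have "\<dots> = snd (bs!b) * P $$ (i, ?j) + (if t > 0 then P $$ (i, ?j - 1) else 0)"
  proof -
    have e: "(\<Sum>l<?n. (if Suc l = ?j \<and> t > 0 then P $$ (i,l) else 0)) = (if t > 0 then P $$ (i, ?j - 1) else 0)"
    proof (cases "t > 0")
      case True
      have "(\<Sum>l<?n. (if Suc l = ?j \<and> t > 0 then P $$ (i,l) else 0)) = (\<Sum>l<?n. (if l = ?j - 1 then P $$ (i,l) else 0))"
        by (rule sum.cong) (use True in auto)
      also have "\<dots> = P $$ (i, ?j - 1)" using jl True by (simp add: sum.delta)
      finally show ?thesis using True by simp
    qed simp
    show ?thesis unfolding sum.distrib e using jl by (simp add: sum.delta mult.commute)
  qed
  finally show ?thesis .
qed

lemma mem_idx: "j \<in> set (eig_col_indices bs lam) \<longleftrightarrow>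
  (\<exists>b t. b < length bs \<and> snd (bs!b) = lam \<and> t < fst (bs!b) \<and> j = block_start bs b + t)"
proof
  assume "j \<in> set (eig_col_indices bs lam)"
  then obtain b where b: "b < length bs" "snd (bs!b) = lam" "block_start bs b \<le> j" "j < block_start bs b + fst (bs!b)"
    unfolding eig_col_indices_def by auto
  then show "\<exists>b t. b < length bs \<and> snd (bs!b) = lam \<and> t < fst (bs!b) \<and> j = block_start bs b + t"
    by (intro exI[of _ b] exI[of _ "j - block_start bs b"]) auto
next
  assume "\<exists>b t. b < length bs \<and> snd (bs!b) = lam \<and> t < fst (bs!b) \<and> j = block_start bs b + t"
  then obtain b t where "b < length bs" "snd (bs!b) = lam" "t < fst (bs!b)" "j = block_start bs b + t" by blast
  then show "j \<in> set (eig_col_indices bs lam)" unfolding eig_col_indices_def by force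
qed

lemma colsum_le_norm1:
  "k < dim_col M \<Longrightarrow> (\<Sum>i<dim_row M. cmod (M $$ (i,k))) \<le> norm1_mat M"
  unfolding norm1_mat_def by (rule Max_ge) auto

lemma norm1_le:
  assumes "0 \<le> B" "\<And>k. k < dim_col M \<Longrightarrow> (\<Sum>i<dim_row M. cmod (M $$ (i,k))) \<le> B"
  shows "norm1_mat M \<le> B"
  unfolding norm1_mat_def using assms by (subst Max_le_iff) auto

theorem theorem2:
  fixes A P Q Vi :: "complex mat" and bs :: "(nat \<times> complex) list"
    and lam c :: complex and N :: nat
  assumes "A \<in> carrier_mat N N"
    and "similar_mat_wit A (jordan_matrix bs) P Q"
    and "eigenvalue A lam"
    and "Vi = c \<cdot>\<^sub>m jordan_eigvec_submatrix P bs lam"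
    and "norm1_mat Vi = 1"
  shows "graph_TV A Vi = norm1_mat (Vi - A * Vi) \<and> graph_TV A Vi \<le> cmod (1 - lam) + 1"
proof -
  let ?J = "jordan_matrix bs"
  define idx where "idx = eig_col_indices bs lam"
  define M where "M = mat_of_cols N (map (col P) idx)"
  have dA: "dim_row A = N" using assms(1) by simp
  have sw0: "{A, ?J, P, Q} \<subseteq> carrier_mat N N \<and> P * Q = 1\<^sub>m N \<and> Q * P = 1\<^sub>m N \<and> A = P * ?J * Q"
    using assms(2) unfolding similar_mat_wit_def Let_def dA .
  have sw: "{A, ?J, P, Q} \<subseteq> carrier_mat N N" "Q * P = 1\<^sub>m N" "A = P * ?J * Q"
    using sw0 by blast+
  have AC: "A \<in> carrier_mat N N" and JC: "?J \<in> carrier_mat N N" and PC: "P \<in> carrier_mat N N"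
    and QC: "Q \<in> carrier_mat N N" using sw(1) by blast+
  have nN: "sum_list (map fst bs) = N" using JC by auto
  have AP: "A * P = P * ?J"
  proof -
    have "A * P = P * ?J * Q * P" using sw(3) by simp
    also have "\<dots> = P * ?J * (Q * P)" using PC JC QC by (simp add: assoc_mult_mat[of _ N N _ N _ N])
    also have "\<dots> = P * ?J" using sw(2) PC JC by (metis mult_carrier_mat right_mult_one_mat)
    finally show ?thesis .
  qed
  have dP: "dim_row P = N" using PC by auto
  have MC: "M \<in> carrier_mat N (length idx)" unfolding M_def using mat_of_cols_carrier(1)[of N "map (col P) idx"] by simp
  have Vi: "Vi = c \<cdot>\<^sub>m M" using assms(4) unfolding M_def idx_def jordan_eigvec_submatrix_def dP by simp
  have idxlt: "idx!k < N" if "k < length idx" for k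
  proof -
    have "idx!k \<in> set (eig_col_indices bs lam)" using that idx_def by simp
    then obtain b t where "b < length bs" "t < fst (bs!b)" "idx!k = block_start bs b + t"
      unfolding mem_idx by blast
    then show ?thesis using block_start_bound nN by fastforce
  qed
  have Mij: "M $$ (i,k) = P $$ (i, idx!k)" if "i < N" "k < length idx" for i k
    unfolding M_def using that PC idxlt[OF that(2)] by (simp add: mat_of_cols_index)
  have AMij: "(A * M) $$ (i,k) = (P * ?J) $$ (i, idx!k)" if "i < N" "k < length idx" for i k
  proof -
    have "col M k = col P (idx!k)" unfolding M_def using that PC
      by (subst col_mat_of_cols) auto
    then show ?thesis using that AC MC PC idxlt[OF that(2)] AP[symmetric] by simp
  qed
  define D where "D = Vi - A * Vi"
  have DC: "D \<in> carrier_mat N (length idx)" unfolding D_def Vi using AC MC by auto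
  have Dij: "D $$ (i,k) = c * M $$ (i,k) - c * (A * M) $$ (i,k)" if "i < N" "k < length idx" for i k
    unfolding D_def Vi using that AC MC by (simp add: mult_smult_distrib[OF AC MC])
  have ViC: "Vi \<in> carrier_mat N (length idx)" using MC Vi by simp
  have cs: "(\<Sum>i<N. cmod (Vi $$ (i,k))) \<le> 1" if "k < length idx" for k
    using colsum_le_norm1[of k Vi] ViC that assms(5) by simp
  have "norm1_mat D \<le> cmod (1 - lam) + 1"
  proof (rule norm1_le)
    fix k assume k: "k < dim_col D"
    hence k': "k < length idx" using DC by simp
    have "idx!k \<in> set (eig_col_indices bs lam)" using k' idx_def by simp
    then obtain b t where bt: "b < length bs" "snd (bs!b) = lam" "t < fst (bs!b)" "idx!k = block_start bs b + t"
      unfolding mem_idx by blast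
    have PJ: "(P * ?J) $$ (i, idx!k) = lam * P $$ (i, idx!k) + (if t > 0 then P $$ (i, idx!k - 1) else 0)"
      if "i < N" for i
      using PJ_entry[OF bt(1,3), of P N i] PC nN that bt by simp
    show "(\<Sum>i<dim_row D. cmod (D $$ (i,k))) \<le> cmod (1 - lam) + 1"
    proof (cases "t > 0")
      case False
      have "(\<Sum>i<dim_row D. cmod (D $$ (i,k))) = (\<Sum>i<N. cmod (1 - lam) * cmod (Vi $$ (i,k)))"
      proof (rule sum.cong)
        show "{..<dim_row D} = {..<N}" using DC by simp
      next
        fix i assume "i \<in> {..<N}"
        hence i: "i < N" by simp
        have v: "Vi $$ (i,k) = c * P $$ (i, idx!k)" using Vi MC i k' Mij by simp
        have "D $$ (i,k) = (1 - lam) * Vi $$ (i,k)"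
          unfolding Dij[OF i k'] AMij[OF i k'] PJ[OF i] Mij[OF i k'] v using False by (simp add: algebra_simps)
        then show "cmod (D $$ (i,k)) = cmod (1 - lam) * cmod (Vi $$ (i,k))" by (simp add: norm_mult)
      qed
      also have "\<dots> \<le> cmod (1 - lam) * 1" unfolding sum_distrib_left[symmetric]
        by (rule mult_left_mono) (use cs k' in auto)
      finally show ?thesis by simp
    next
      case True
      have "idx!k - 1 \<in> set (eig_col_indices bs lam)" unfolding mem_idx
        using bt True by (intro exI[of _ b] exI[of _ "t - 1"]) auto
      then obtain k2 where k2: "k2 < length idx" "idx!k2 = idx!k - 1"
        unfolding idx_def[symmetric] by (metis in_set_conv_nth)
      have "(\<Sum>i<dim_row D. cmod (D $$ (i,k))) \<le>
            (\<Sum>i<N. cmod (1 - lam) * cmod (Vi $$ (i,k)) + cmod (Vi $$ (i,k2)))"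
      proof -
        have "(\<Sum>i<dim_row D. cmod (D $$ (i,k))) = (\<Sum>i<N. cmod ((1 - lam) * Vi $$ (i,k) - Vi $$ (i,k2)))"
        proof (rule sum.cong)
          show "{..<dim_row D} = {..<N}" using DC by simp
        next
          fix i assume "i \<in> {..<N}"
          hence i: "i < N" by simp
          have v: "Vi $$ (i,k) = c * P $$ (i, idx!k)" using Vi MC i k' Mij by simp
          have v2: "Vi $$ (i,k2) = c * P $$ (i, idx!k - 1)" using Vi MC i k2 Mij by simp
          show "cmod (D $$ (i,k)) = cmod ((1 - lam) * Vi $$ (i,k) - Vi $$ (i,k2))"
            unfolding Dij[OF i k'] AMij[OF i k'] PJ[OF i] Mij[OF i k'] v v2 using True by (simp add: algebra_simps)
        qed
        also have "\<dots> \<le> (\<Sum>i<N. cmod (1 - lam) * cmod (Vi $$ (i,k)) + cmod (Vi $$ (i,k2)))"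
          by (rule sum_mono) (metis norm_mult norm_triangle_ineq4)
        finally show ?thesis .
      qed
      also have "\<dots> = cmod (1 - lam) * (\<Sum>i<N. cmod (Vi $$ (i,k))) + (\<Sum>i<N. cmod (Vi $$ (i,k2)))"
        by (simp add: sum.distrib sum_distrib_left)
      also have "\<dots> \<le> cmod (1 - lam) * 1 + 1"
        by (rule add_mono, rule mult_left_mono) (use cs k' k2 in auto)
      finally show ?thesis by simp
    qed
  qed simp
  then show ?thesis unfolding graph_TV_def D_def by simp
qed

end
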